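(* Consider the robust Bayesian persuasion setting described in the context with monotonic Receiver utilities. For every number of states $n$ and every prior $\mu=(\mu_1,\dots,\mu_n)$ with full support, $$\mathrm{Reg}_{\mathrm{MON}}=\begin{cases}\frac{1}{e} & \text{if } \mu_n\le \frac1e,\\ -\mu_n\ln\mu_n & \text{if } \mu_n>\frac1e.\end{cases}$$
   Context: Setting: a finite state space $\Omega=[n]=\{1,\dots,n\}$ and a publicly known prior $\mu\in\Delta(\Omega)$ with $\mu_i>0$ for all $i$. A signaling scheme is a stochastic map $\pi$ from $\Omega$ to a (finite or infinite) signal set $S$; Sender commits to $\pi$, the state $\omega\sim\mu$ is drawn, a signal $s\sim\pi(\omega)$ is sent, and Receiver forms the Bayesian posterior $p(s)\in\Delta(\Omega)$. Receiver has actions $\{0,1\}$ (reject/adopt) and utility $u_r:\Omega\times\{0,1\}\to\mathbb{R}$ with $u_r(i,0)=0$ for all $i$; Receiver adopts at posterior $p$ iff $\mathbb{E}_{\omega'\sim p}[u_r(\omega',1)]\ge 0$ (ties broken in favor of adoption). Sender's utility from $\pi$ is $u(\pi,u_r)=\Pr_{s}[\text{Receiver adopts at } p(s)]$. Let $u^*(u_r)=\sup_\pi u(\pi,u_r)$. For a class $\mathcal{U}$ of Receiver utilities, $\mathrm{Reg}(\pi)=\sup_{u_r\in\mathcal{U}}\{u^*(u_r)-u(\pi,u_r)\}$ and $\mathrm{Reg}=\inf_\pi \mathrm{Reg}(\pi)$. $\mathrm{Reg}_{\mathrm{MON}}$ denotes this regret when $\mathcal{U}$ is the class of Receiver utilities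 for which $i\mapsto u_r(i,1)$ is non-decreasing in the state $i\in[n]$. *)

theory Defs
  imports "HOL-Probability.Probability"
begin

text \<open>States are 1..n, prior mu :: nat => real (only mu 1..mu n matter).
  A signaling scheme is a stochastic map from states to a signal space: a family of
  probability measures pi i (i = 1..n) on a common measurable signal space (signals
  are represented as reals with an arbitrary sigma-algebra).\<close>

definition scheme :: "nat \<Rightarrow> (nat \<Rightarrow> real measure) \<Rightarrow> bool" where
  "scheme n \<pi> \<longleftrightarrow> (\<forall>i\<in>{1..n}. prob_space (\<pi> i)) \<and>
                    (\<forall>i\<in>{1..n}. sets (\<pi> i) = sets (\<pi> 1))"

definition signal_dist :: "nat \<Rightarrow> (nat \<Rightarrow> real) \<Rightarrow> (nat \<Rightarrow> real measure) \<Rightarrow> real measure" where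
  "signal_dist n \<mu> \<pi> = measure_of (space (\<pi> 1)) (sets (\<pi> 1))
      (\<lambda>A. \<Sum>i=1..n. ennreal (\<mu> i) * emeasure (\<pi> i) A)"

definition posterior :: "nat \<Rightarrow> (nat \<Rightarrow> real) \<Rightarrow> (nat \<Rightarrow> real measure) \<Rightarrow> nat \<Rightarrow> real \<Rightarrow> real" where
  "posterior n \<mu> \<pi> i s = \<mu> i * enn2real (RN_deriv (signal_dist n \<mu> \<pi>) (\<pi> i) s)"

text \<open>Receiver utility: u i = u_r(i,1) (adopt); u_r(i,0) = 0. Receiver adopts iff the
  posterior expected utility of adopting is >= 0. Sender utility = probability of adoption.\<close>
definition sender_util :: "nat \<Rightarrow> (nat \<Rightarrow> real) \<Rightarrow> (nat \<Rightarrow> real measure) \<Rightarrow> (nat \<Rightarrow> real) \<Rightarrow> real" where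
  "sender_util n \<mu> \<pi> u = measure (signal_dist n \<mu> \<pi>)
      {s \<in> space (signal_dist n \<mu> \<pi>). (\<Sum>i=1..n. posterior n \<mu> \<pi> i s * u i) \<ge> 0}"

definition opt_util :: "nat \<Rightarrow> (nat \<Rightarrow> real) \<Rightarrow> (nat \<Rightarrow> real) \<Rightarrow> real" where
  "opt_util n \<mu> u = (SUP \<pi>\<in>{\<pi>. scheme n \<pi>}. sender_util n \<mu> \<pi> u)"

definition mon_util :: "nat \<Rightarrow> (nat \<Rightarrow> real) \<Rightarrow> bool" where
  "mon_util n u \<longleftrightarrow> (\<forall>i j. 1 \<le> i \<longrightarrow> i \<le> j \<longrightarrow> j \<le> n \<longrightarrow> u i \<le> u j)"

definition regret_MON :: "nat \<Rightarrow> (nat \<Rightarrow> real) \<Rightarrow> (nat \<Rightarrow> real measure) \<Rightarrow> real" where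
  "regret_MON n \<mu> \<pi> = (SUP u\<in>{u. mon_util n u}. opt_util n \<mu> u - sender_util n \<mu> \<pi> u)"

definition Reg_MON :: "nat \<Rightarrow> (nat \<Rightarrow> real) \<Rightarrow> real" where
  "Reg_MON n \<mu> = (INF \<pi>\<in>{\<pi>. scheme n \<pi>}. regret_MON n \<mu> \<pi>)"

end

theory Submission
  imports Defs
begin


lemma telescope_down:
  fixes g :: "nat \<Rightarrow> real"
  shows "(\<Sum>i=1..k. g i - g (Suc i)) = g 1 - g (Suc k)"
  by (induction k) auto

locale setting =
  fixes n :: nat and \<mu> :: "nat \<Rightarrow> real"
  assumes n1: "n \<ge> 1"
    and mupos: "\<forall>i\<in>{1..n}. \<mu> i > 0"
    and musum: "(\<Sum>i=1..n. \<mu> i) = 1"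
begin

lemma mu_pos: "i \<in> {1..n} \<Longrightarrow> 0 < \<mu> i"
  using mupos by blast

lemma mu_nonneg: "i \<in> {1..n} \<Longrightarrow> 0 \<le> \<mu> i"
  using mupos by (meson less_imp_le)

definition Stail :: "nat \<Rightarrow> real" where "Stail i = (\<Sum>j=i..n. \<mu> j)"
definition mtop :: "nat \<Rightarrow> real \<Rightarrow> real" where
  "mtop i z = min z (Stail i) - min z (Stail (Suc i))"
definition phi :: "(nat \<Rightarrow> real) \<Rightarrow> real \<Rightarrow> real" where
  "phi u z = (\<Sum>i=1..n. u i * mtop i z)"

lemma Stail_Suc: "1 \<le> i \<Longrightarrow> i \<le> n \<Longrightarrow> Stail i = \<mu> i + Stail (Suc i)"
  unfolding Stail_def by (simp add: sum.atLeast_Suc_atMost)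

lemma Stail_beyond: "i > n \<Longrightarrow> Stail i = 0"
  unfolding Stail_def by simp

lemma Stail_1: "Stail 1 = 1"
  unfolding Stail_def using musum by simp

lemma Stail_n: "Stail n = \<mu> n"
  unfolding Stail_def by simp

lemma Stail_nonneg: "1 \<le> i \<Longrightarrow> Stail i \<ge> 0"
  unfolding Stail_def using mupos by (intro sum_nonneg) (auto intro: less_imp_le)

lemma Stail_mono: "1 \<le> i \<Longrightarrow> i \<le> j \<Longrightarrow> Stail j \<le> Stail i"
  unfolding Stail_def using mupos by (intro sum_mono2) (auto intro: less_imp_le)

lemma mtop_nonneg: "1 \<le> i \<Longrightarrow> 0 \<le> mtop i z"
  unfolding mtop_def using Stail_mono[of i "Suc i"] by (auto simp: min_def)

lemma mtop_le: "1 \<le> i \<Longrightarrow> i \<le> n \<Longrightarrow> mtop i z \<le> \<mu> i"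
  unfolding mtop_def using Stail_Suc[of i] Stail_mono[of i "Suc i"] by (auto simp: min_def)

lemma sum_mtop: "0 \<le> z \<Longrightarrow> z \<le> 1 \<Longrightarrow> (\<Sum>i=1..n. mtop i z) = z"
  unfolding mtop_def using telescope_down[of "\<lambda>i. min z (Stail i)" n] Stail_1 Stail_beyond[of "Suc n"]
  by simp

lemma mtop_n: "0 \<le> z \<Longrightarrow> mtop n z = min z (\<mu> n)"
  unfolding mtop_def using Stail_n Stail_beyond[of "Suc n"] by simp

lemma mtop_low: "1 \<le> i \<Longrightarrow> i < n \<Longrightarrow> z \<le> \<mu> n \<Longrightarrow> mtop i z = 0"
proof -
  assume a: "1 \<le> i" "i < n" "z \<le> \<mu> n"
  have "Stail n \<le> Stail (Suc i)" using a by (intro Stail_mono) auto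
  moreover have "Stail (Suc i) \<le> Stail i" using a by (intro Stail_mono) auto
  ultimately show ?thesis using a Stail_n unfolding mtop_def by (auto simp: min_def)
qed

lemma KL:
  assumes mon: "mon_util n u"
    and x: "\<forall>i\<in>{1..n}. 0 \<le> x i \<and> x i \<le> \<mu> i"
  shows "(\<Sum>i=1..n. u i * x i) \<le> phi u (\<Sum>i=1..n. x i)"
proof -
  define z where "z = (\<Sum>i=1..n. x i)"
  have z0: "0 \<le> z" unfolding z_def using x by (intro sum_nonneg) auto
  have z1: "z \<le> 1" unfolding z_def using x musum by (metis sum_mono)
  define K where "K = {i\<in>{1..n}. z \<le> Stail i}"
  have finK: "finite K" unfolding K_def by auto
  have K1: "1 \<in> K" unfolding K_def using n1 z1 Stail_1 by auto
  define k where "k = Max K"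
  have kK: "k \<in> K" unfolding k_def using finK K1 by (intro Max_in) auto
  have k1: "1 \<le> k" "k \<le> n" and zk: "z \<le> Stail k" using kK unfolding K_def by auto
  have zk2: "Stail (Suc k) \<le> z"
  proof (cases "k = n")
    case True then show ?thesis using Stail_beyond[of "Suc n"] z0 by simp
  next
    case False
    then have "Suc k \<in> {1..n}" using k1 by auto
    moreover have "Suc k \<notin> K" using finK k_def by (metis Max_ge Suc_n_not_le_n)
    ultimately show ?thesis unfolding K_def by auto
  qed
  have trm: "(mtop i z - x i) * (u i - u k) \<ge> 0" if i: "i \<in> {1..n}" for i
  proof -
    consider "i < k" | "i = k" | "i > k" by linarith
    then show ?thesis
    proof cases
      case 1
      have "Stail k \<le> Stail (Suc i)" using 1 i by (intro Stail_mono) auto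
      moreover have "Stail (Suc i) \<le> Stail i" using i by (intro Stail_mono) auto
      ultimately have "mtop i z = 0" unfolding mtop_def using zk by (auto simp: min_def)
      moreover have "u i \<le> u k" using mon 1 i k1 unfolding mon_util_def by auto
      ultimately show ?thesis using x i by (simp add: mult_nonneg_nonpos)
    next
      case 2 then show ?thesis by simp
    next
      case 3
      have "Stail i \<le> Stail (Suc k)" using 3 i by (intro Stail_mono) auto
      moreover have "Stail (Suc i) \<le> Stail i" using i by (intro Stail_mono) auto
      ultimately have "mtop i z = \<mu> i" unfolding mtop_def using zk2 Stail_Suc[of i] i
        by (auto simp: min_def)
      moreover have "u k \<le> u i" using mon 3 i k1 unfolding mon_util_def by auto
      ultimately show ?thesis using x i by simp
    qed
  qed
  have "0 \<le> (\<Sum>i=1..n. (mtop i z - x i) * (u i - u k))"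
    using trm by (intro sum_nonneg) auto
  also have "\<dots> = (\<Sum>i=1..n. u i * mtop i z) - (\<Sum>i=1..n. u i * x i)
      - u k * ((\<Sum>i=1..n. mtop i z) - (\<Sum>i=1..n. x i))"
    by (simp add: algebra_simps sum_subtractf sum_distrib_left sum.distrib)
  also have "\<dots> = phi u z - (\<Sum>i=1..n. u i * x i)"
    using sum_mtop[OF z0 z1] unfolding phi_def z_def by simp
  finally show ?thesis unfolding z_def by simp
qed

lemma phi_zero: "phi u 0 = 0"
  unfolding phi_def mtop_def using Stail_nonneg
  by (intro sum.neutral) (auto simp: min_def)

lemma phi_sub:
  assumes mon: "mon_util n u" and D: "0 \<le> D" "D \<le> s" and s1: "s \<le> 1" and ps: "phi u s \<ge> 0"
  shows "phi u D \<ge> 0"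
proof (cases "s = 0")
  case True then show ?thesis using D phi_zero by simp
next
  case False
  then have s0: "s > 0" using D by simp
  define x where "x i = D / s * mtop i s" for i
  have x: "\<forall>i\<in>{1..n}. 0 \<le> x i \<and> x i \<le> \<mu> i"
  proof
    fix i assume i: "i \<in> {1..n}"
    have "D / s \<le> 1" using D s0 by simp
    moreover have "0 \<le> D / s" using D s0 by simp
    moreover have "D / s * mtop i s \<le> 1 * \<mu> i"
      using mtop_nonneg[of i s] mtop_le[of i s] i \<open>D / s \<le> 1\<close> \<open>0 \<le> D / s\<close>
      by (intro mult_mono) auto
    ultimately show "0 \<le> x i \<and> x i \<le> \<mu> i"
      unfolding x_def using mtop_nonneg[of i s] i \<open>0 \<le> D / s\<close> by (auto simp del: times_divide_eq_left)
  qed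
  have sx: "(\<Sum>i=1..n. x i) = D"
  proof -
    have "(\<Sum>i=1..n. x i) = D / s * (\<Sum>i=1..n. mtop i s)"
      unfolding x_def by (rule sum_distrib_left[symmetric])
    then show ?thesis using sum_mtop[of s] s0 s1 by simp
  qed
  have "(\<Sum>i=1..n. u i * x i) = D / s * phi u s"
    unfolding x_def phi_def by (simp add: sum_distrib_left algebra_simps)
  also have "\<dots> \<ge> 0" using ps D s0 by simp
  finally show ?thesis using KL[OF mon x] sx by simp
qed

definition ubin :: "real \<Rightarrow> nat \<Rightarrow> real" where
  "ubin \<theta> i = (if i = n then 1 - \<theta> else - \<theta>)"

lemma ubin_mon: "mon_util n (ubin \<theta>)"
  unfolding mon_util_def ubin_def by auto

lemma phi_ubin:
  assumes "0 \<le> z" "z \<le> 1"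
  shows "phi (ubin \<theta>) z = mtop n z - \<theta> * z"
proof -
  have "phi (ubin \<theta>) z = (\<Sum>i=1..n. - \<theta> * mtop i z + (if i = n then mtop n z else 0))"
    unfolding phi_def ubin_def by (intro sum.cong) (auto simp: algebra_simps)
  also have "\<dots> = (\<Sum>i=1..n. - \<theta> * mtop i z) + (\<Sum>i=1..n. (if i = n then mtop n z else 0))"
    by (rule sum.distrib)
  also have "\<dots> = - \<theta> * z + mtop n z"
    using sum_mtop[OF assms] n1 by (simp add: sum_distrib_left[symmetric] sum_negf)
  finally show ?thesis by simp
qed

end


locale sch = setting +
  fixes \<pi> :: "nat \<Rightarrow> real measure"
  assumes sch: "scheme n \<pi>"
begin

abbreviation "\<nu> \<equiv> signal_dist n \<mu> \<pi>"

lemma prob_pi: "i \<in> {1..n} \<Longrightarrow> prob_space (\<pi> i)"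
  using sch unfolding scheme_def by blast

lemma sets_pi: "i \<in> {1..n} \<Longrightarrow> sets (\<pi> i) = sets (\<pi> 1)"
  using sch unfolding scheme_def by blast

lemma space_pi: "i \<in> {1..n} \<Longrightarrow> space (\<pi> i) = space (\<pi> 1)"
  using sets_pi sets_eq_imp_space_eq by blast

lemma sets_nu: "sets \<nu> = sets (\<pi> 1)"
  unfolding signal_dist_def by (rule sigma_algebra.sets_measure_of_eq[OF sets.sigma_algebra_axioms])

lemma space_nu: "space \<nu> = space (\<pi> 1)"
  unfolding signal_dist_def by (rule sigma_algebra.space_measure_of_eq[OF sets.sigma_algebra_axioms])

lemma emeasure_nu:
  assumes A: "A \<in> sets (\<pi> 1)"
  shows "emeasure \<nu> A = (\<Sum>i=1..n. ennreal (\<mu> i) * emeasure (\<pi> i) A)"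
  unfolding signal_dist_def
proof (rule emeasure_measure_of_sigma[OF sets.sigma_algebra_axioms _ _ A])
  show "positive (sets (\<pi> 1)) (\<lambda>A. \<Sum>i = 1..n. ennreal (\<mu> i) * emeasure (\<pi> i) A)"
    unfolding positive_def by simp
  show "countably_additive (sets (\<pi> 1)) (\<lambda>A. \<Sum>i = 1..n. ennreal (\<mu> i) * emeasure (\<pi> i) A)"
    unfolding countably_additive_def
  proof (intro allI impI)
    fix F :: "nat \<Rightarrow> real set"
    assume F: "range F \<subseteq> sets (\<pi> 1)" "disjoint_family F" "\<Union> (range F) \<in> sets (\<pi> 1)"
    have "(\<Sum>j. \<Sum>i = 1..n. ennreal (\<mu> i) * emeasure (\<pi> i) (F j))
        = (\<Sum>i = 1..n. \<Sum>j. ennreal (\<mu> i) * emeasure (\<pi> i) (F j))"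
      by (rule suminf_sum) (rule summableI)
    also have "\<dots> = (\<Sum>i = 1..n. ennreal (\<mu> i) * emeasure (\<pi> i) (\<Union> (range F)))"
    proof (intro sum.cong refl)
      fix i assume i: "i \<in> {1..n}"
      have "range F \<subseteq> sets (\<pi> i)" using F sets_pi[OF i] by simp
      then have "(\<Sum>j. emeasure (\<pi> i) (F j)) = emeasure (\<pi> i) (\<Union> (range F))"
        using F by (intro suminf_emeasure) auto
      then show "(\<Sum>j. ennreal (\<mu> i) * emeasure (\<pi> i) (F j)) = ennreal (\<mu> i) * emeasure (\<pi> i) (\<Union> (range F))"
        by simp
    qed
    finally show "(\<Sum>j. \<Sum>i = 1..n. ennreal (\<mu> i) * emeasure (\<pi> i) (F j))
        = (\<Sum>i = 1..n. ennreal (\<mu> i) * emeasure (\<pi> i) (\<Union> (range F)))" .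
  qed
qed

lemma emeasure_nu_real:
  assumes A: "A \<in> sets (\<pi> 1)"
  shows "emeasure \<nu> A = ennreal (\<Sum>i=1..n. \<mu> i * measure (\<pi> i) A)"
proof -
  have "emeasure \<nu> A = (\<Sum>i=1..n. ennreal (\<mu> i * measure (\<pi> i) A))"
    unfolding emeasure_nu[OF A]
  proof (intro sum.cong refl)
    fix i assume i: "i \<in> {1..n}"
    interpret P: prob_space "\<pi> i" using prob_pi[OF i] .
    show "ennreal (\<mu> i) * emeasure (\<pi> i) A = ennreal (\<mu> i * measure (\<pi> i) A)"
      using mu_nonneg[OF i] by (simp add: P.emeasure_eq_measure ennreal_mult)
  qed
  also have "\<dots> = ennreal (\<Sum>i=1..n. \<mu> i * measure (\<pi> i) A)"
    using mu_nonneg by (intro sum_ennreal mult_nonneg_nonneg) auto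
  finally show ?thesis .
qed

lemma measure_nu:
  assumes A: "A \<in> sets (\<pi> 1)"
  shows "measure \<nu> A = (\<Sum>i=1..n. \<mu> i * measure (\<pi> i) A)"
proof -
  have "0 \<le> (\<Sum>i=1..n. \<mu> i * measure (\<pi> i) A)"
    using mu_nonneg by (intro sum_nonneg mult_nonneg_nonneg) auto
  then show ?thesis using emeasure_nu_real[OF A] unfolding measure_def by simp
qed

lemma prob_nu: "prob_space \<nu>"
proof
  have "space \<nu> \<in> sets (\<pi> 1)" using space_nu sets.top by metis
  then have "emeasure \<nu> (space \<nu>) = ennreal (\<Sum>i=1..n. \<mu> i * measure (\<pi> i) (space \<nu>))"
    by (rule emeasure_nu_real)
  also have "(\<Sum>i=1..n. \<mu> i * measure (\<pi> i) (space \<nu>)) = (\<Sum>i=1..n. \<mu> i)"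
  proof (intro sum.cong refl)
    fix i assume i: "i \<in> {1..n}"
    interpret P: prob_space "\<pi> i" using prob_pi[OF i] .
    show "\<mu> i * measure (\<pi> i) (space \<nu>) = \<mu> i"
      using space_nu space_pi[OF i] P.prob_space by simp
  qed
  finally show "emeasure \<nu> (space \<nu>) = 1" using musum by simp
qed

interpretation N: prob_space \<nu> by (rule prob_nu)

lemma ac: "i \<in> {1..n} \<Longrightarrow> absolutely_continuous \<nu> (\<pi> i)"
  unfolding absolutely_continuous_def
proof
  fix i A assume i: "i \<in> {1..n}" and A: "A \<in> null_sets \<nu>"
  then have As: "A \<in> sets (\<pi> 1)" using sets_nu by auto
  have z: "(\<Sum>j=1..n. ennreal (\<mu> j) * emeasure (\<pi> j) A) = 0"
    by (subst emeasure_nu[OF As, symmetric]) (rule null_setsD1[OF A])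
  have "ennreal (\<mu> i) * emeasure (\<pi> i) A = 0"
    using iffD1[OF sum_eq_0_iff[of "{1..n}" "\<lambda>j. ennreal (\<mu> j) * emeasure (\<pi> j) A"] z] i
    by blast
  then have "emeasure (\<pi> i) A = 0" using mu_pos[OF i] by simp
  then show "A \<in> null_sets (\<pi> i)" using As sets_pi[OF i] by auto
qed

lemma sets_pi_nu: "i \<in> {1..n} \<Longrightarrow> sets (\<pi> i) = sets \<nu>"
  using sets_pi[of i] sets_nu by metis

lemma density_RN: "i \<in> {1..n} \<Longrightarrow> density \<nu> (RN_deriv \<nu> (\<pi> i)) = \<pi> i"
  by (intro N.density_RN_deriv ac sets_pi_nu)

lemma RN_fin: "i \<in> {1..n} \<Longrightarrow> AE x in \<nu>. RN_deriv \<nu> (\<pi> i) x \<noteq> \<infinity>"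
proof -
  assume i: "i \<in> {1..n}"
  interpret P: prob_space "\<pi> i" using prob_pi[OF i] .
  show ?thesis
    by (intro N.RN_deriv_finite ac sets_pi_nu i) unfold_locales
qed

abbreviation "post i \<equiv> posterior n \<mu> \<pi> i"

lemma post_meas[measurable]: "post i \<in> borel_measurable \<nu>"
  unfolding posterior_def by measurable

lemma post_nonneg: "i \<in> {1..n} \<Longrightarrow> 0 \<le> post i x"
  unfolding posterior_def using mu_nonneg by auto

lemma nn_post:
  assumes i: "i \<in> {1..n}" and A: "A \<in> sets \<nu>"
  shows "(\<integral>\<^sup>+x. ennreal (indicator A x * post i x) \<partial>\<nu>) = ennreal (\<mu> i * measure (\<pi> i) A)"
proof -
  interpret P: prob_space "\<pi> i" using prob_pi[OF i] .
  have "(\<integral>\<^sup>+x. ennreal (indicator A x * post i x) \<partial>\<nu>)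
      = (\<integral>\<^sup>+x. ennreal (\<mu> i) * (RN_deriv \<nu> (\<pi> i) x * indicator A x) \<partial>\<nu>)"
  proof (rule nn_integral_cong_AE)
    show "AE x in \<nu>. ennreal (indicator A x * post i x) = ennreal (\<mu> i) * (RN_deriv \<nu> (\<pi> i) x * indicator A x)"
      using RN_fin[OF i]
    proof eventually_elim
      case (elim x)
      then show ?case using mu_nonneg[OF i] unfolding posterior_def
        by (auto simp: indicator_def ennreal_mult ennreal_enn2real_if)
    qed
  qed
  also have "\<dots> = ennreal (\<mu> i) * (\<integral>\<^sup>+x. RN_deriv \<nu> (\<pi> i) x * indicator A x \<partial>\<nu>)"
    using A by (intro nn_integral_cmult) simp
  also have "(\<integral>\<^sup>+x. RN_deriv \<nu> (\<pi> i) x * indicator A x \<partial>\<nu>) = emeasure (\<pi> i) A"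
    using A density_RN[OF i] emeasure_density[of "RN_deriv \<nu> (\<pi> i)" \<nu> A] by simp
  also have "ennreal (\<mu> i) * emeasure (\<pi> i) A = ennreal (\<mu> i * measure (\<pi> i) A)"
    using mu_nonneg[OF i] by (simp add: P.emeasure_eq_measure ennreal_mult)
  finally show ?thesis .
qed

lemma int_post:
  assumes i: "i \<in> {1..n}" and A: "A \<in> sets \<nu>"
  shows "integrable \<nu> (\<lambda>x. indicator A x * post i x)"
    and "(\<integral>x. indicator A x * post i x \<partial>\<nu>) = \<mu> i * measure (\<pi> i) A"
proof -
  show "integrable \<nu> (\<lambda>x. indicator A x * post i x)"
    using A nn_post[OF i A] post_nonneg[OF i]
    by (intro integrableI_nn_integral_finite[where x="\<mu> i * measure (\<pi> i) A"]) auto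
  have "(\<integral>x. indicator A x * post i x \<partial>\<nu>) = enn2real (ennreal (\<mu> i * measure (\<pi> i) A))"
    using A nn_post[OF i A] post_nonneg[OF i]
    by (subst integral_eq_nn_integral) auto
  also have "\<dots> = \<mu> i * measure (\<pi> i) A" using mu_nonneg[OF i] by simp
  finally show "(\<integral>x. indicator A x * post i x \<partial>\<nu>) = \<mu> i * measure (\<pi> i) A" .
qed

definition Aset :: "(nat \<Rightarrow> real) \<Rightarrow> real set" where
  "Aset u = {s \<in> space \<nu>. (\<Sum>i=1..n. post i s * u i) \<ge> 0}"

lemma Aset_sets: "Aset u \<in> sets \<nu>"
  unfolding Aset_def by measurable

lemma sender_eq: "sender_util n \<mu> \<pi> u = measure \<nu> (Aset u)"
  unfolding sender_util_def Aset_def by simp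

lemma sender_sum: "sender_util n \<mu> \<pi> u = (\<Sum>i=1..n. \<mu> i * measure (\<pi> i) (Aset u))"
  unfolding sender_eq using Aset_sets sets_nu by (intro measure_nu) auto

lemma sender_constraint: "(\<Sum>i=1..n. u i * (\<mu> i * measure (\<pi> i) (Aset u))) \<ge> 0"
proof -
  have "(\<Sum>i=1..n. u i * (\<mu> i * measure (\<pi> i) (Aset u)))
      = (\<Sum>i=1..n. u i * (\<integral>x. indicator (Aset u) x * post i x \<partial>\<nu>))"
    using int_post(2)[OF _ Aset_sets] by simp
  also have "\<dots> = (\<Sum>i=1..n. (\<integral>x. u i * (indicator (Aset u) x * post i x) \<partial>\<nu>))"
    by simp
  also have "\<dots> = (\<integral>x. (\<Sum>i=1..n. u i * (indicator (Aset u) x * post i x)) \<partial>\<nu>)"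
    by (rule Bochner_Integration.integral_sum[where I="{1..n}" and M=\<nu> and f="\<lambda>i x. u i * (indicator (Aset u) x * post i x)", symmetric])
      (auto intro!: integrable_mult_right int_post(1)[OF _ Aset_sets])
  also have "\<dots> \<ge> 0"
  proof (intro integral_nonneg_AE AE_I2)
    fix x assume "x \<in> space \<nu>"
    have "(\<Sum>i=1..n. u i * (indicator (Aset u) x * post i x)) = indicator (Aset u) x * (\<Sum>i=1..n. post i x * u i)"
      by (simp add: sum_distrib_left algebra_simps)
    also have "\<dots> \<ge> 0" unfolding Aset_def by (auto simp: indicator_def)
    finally show "0 \<le> (\<Sum>i=1..n. u i * (indicator (Aset u) x * post i x))" .
  qed
  finally show ?thesis .
qed

lemma sender_le1: "sender_util n \<mu> \<pi> u \<le> 1"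
  unfolding sender_eq by simp

lemma sender_ge0: "sender_util n \<mu> \<pi> u \<ge> 0"
  unfolding sender_eq by simp

end


context setting
begin

definition gfun :: "real set \<Rightarrow> (real \<Rightarrow> real) \<Rightarrow> nat \<Rightarrow> real \<Rightarrow> real" where
  "gfun F w i s = (if s = 0 then 1 - (\<Sum>D\<in>F. w D * mtop i D) / \<mu> i
     else if s \<in> F then w s * mtop i s / \<mu> i else 0)"

definition consch :: "real set \<Rightarrow> (real \<Rightarrow> real) \<Rightarrow> nat \<Rightarrow> real measure" where
  "consch F w i = point_measure (insert 0 F) (\<lambda>s. ennreal (gfun F w i s))"

definition goodQ :: "real set \<Rightarrow> (real \<Rightarrow> real) \<Rightarrow> bool" where
  "goodQ F w \<longleftrightarrow> finite F \<and> F \<subseteq> {0<..1} \<and> (\<forall>D\<in>F. 0 \<le> w D) \<and> (\<Sum>D\<in>F. w D) = 1"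

lemma gfun_nonneg:
  assumes Q: "goodQ F w" and i: "i \<in> {1..n}"
  shows "0 \<le> gfun F w i s"
proof -
  have mi: "0 < \<mu> i" using mu_pos[OF i] .
  have "(\<Sum>D\<in>F. w D * mtop i D) \<le> (\<Sum>D\<in>F. w D * \<mu> i)"
    using Q i mtop_le[of i] unfolding goodQ_def by (intro sum_mono mult_left_mono) auto
  also have "\<dots> = \<mu> i" using Q unfolding goodQ_def by (simp add: sum_distrib_right[symmetric])
  finally have "(\<Sum>D\<in>F. w D * mtop i D) / \<mu> i \<le> 1" using mi by simp
  moreover have "s \<in> F \<Longrightarrow> 0 \<le> w s * mtop i s / \<mu> i"
    using Q mtop_nonneg[of i s] i mi unfolding goodQ_def by auto
  ultimately show ?thesis unfolding gfun_def by auto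
qed

lemma gfun_sum:
  assumes Q: "goodQ F w" and i: "i \<in> {1..n}"
  shows "(\<Sum>s\<in>insert 0 F. gfun F w i s) = 1"
proof -
  have F0: "0 \<notin> F" "finite F" using Q unfolding goodQ_def by auto
  have "(\<Sum>s\<in>insert 0 F. gfun F w i s) = gfun F w i 0 + (\<Sum>s\<in>F. gfun F w i s)"
    using F0 by simp
  also have "(\<Sum>s\<in>F. gfun F w i s) = (\<Sum>s\<in>F. w s * mtop i s / \<mu> i)"
    using F0 unfolding gfun_def by (intro sum.cong) auto
  also have "\<dots> = (\<Sum>D\<in>F. w D * mtop i D) / \<mu> i" by (simp add: sum_divide_distrib)
  finally show ?thesis unfolding gfun_def by simp
qed

lemma consch_scheme:
  assumes Q: "goodQ F w"
  shows "scheme n (consch F w)"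
  unfolding scheme_def
proof safe
  fix i assume i: "i \<in> {1..n}"
  have fin: "finite (insert 0 F)" using Q unfolding goodQ_def by auto
  have "(\<Sum>s\<in>insert 0 F. ennreal (gfun F w i s)) = ennreal (\<Sum>s\<in>insert 0 F. gfun F w i s)"
    using gfun_nonneg[OF Q i] by (intro sum_ennreal) auto
  also have "\<dots> = 1" using gfun_sum[OF Q i] by simp
  finally show "prob_space (consch F w i)"
    unfolding consch_def by (intro prob_space_point_measure fin) auto
qed (auto simp: consch_def sets_point_measure)

lemma emeasure_consch:
  assumes Q: "goodQ F w" and D: "D \<in> insert 0 F"
  shows "emeasure (consch F w i) {D} = ennreal (gfun F w i D)"
  using Q D unfolding consch_def goodQ_def by (subst emeasure_point_measure_finite) auto

lemma consch_sender:
  assumes Q: "goodQ F w"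
  shows "(\<Sum>D\<in>{D\<in>F. phi u D \<ge> 0}. w D * D) \<le> sender_util n \<mu> (consch F w) u"
proof -
  interpret S: sch n \<mu> "consch F w"
    by unfold_locales (rule consch_scheme[OF Q])
  interpret N: prob_space "signal_dist n \<mu> (consch F w)" by (rule S.prob_nu)
  let ?\<nu> = "signal_dist n \<mu> (consch F w)"
  have finF: "finite F" and F01: "F \<subseteq> {0<..1}" and w0: "\<forall>D\<in>F. 0 \<le> w D"
    using Q unfolding goodQ_def by auto
  have sets1: "sets (consch F w 1) = Pow (insert 0 F)"
    unfolding consch_def by (simp add: sets_point_measure)
  have setsN: "sets ?\<nu> = Pow (insert 0 F)" using S.sets_nu sets1 by simp
  have spaceN: "space ?\<nu> = insert 0 F" using setsN by (metis sets_eq_imp_space_eq space_count_space sets_count_space)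
  define G where "G = {D\<in>F. phi u D \<ge> 0 \<and> w D > 0}"
  have single: "measure ?\<nu> {D} = w D * D" if D: "D \<in> F" for D
  proof -
    have "{D} \<in> sets (consch F w 1)" using sets1 D by auto
    then have "measure ?\<nu> {D} = (\<Sum>i=1..n. \<mu> i * measure (consch F w i) {D})"
      by (rule S.measure_nu)
    also have "\<dots> = (\<Sum>i=1..n. \<mu> i * gfun F w i D)"
    proof (intro sum.cong refl)
      fix i assume i: "i \<in> {1..n}"
      show "\<mu> i * measure (consch F w i) {D} = \<mu> i * gfun F w i D"
        unfolding measure_def using emeasure_consch[OF Q, of D i] D gfun_nonneg[OF Q i] by simp
    qed
    also have "\<dots> = (\<Sum>i=1..n. w D * mtop i D)"
    proof (intro sum.cong refl)
      fix i assume i: "i \<in> {1..n}"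
      have "D \<noteq> 0" using D F01 by auto
      then show "\<mu> i * gfun F w i D = w D * mtop i D"
        using D mu_pos[OF i] unfolding gfun_def by auto
    qed
    also have "\<dots> = w D * D" using sum_mtop[of D] D F01
      by (auto simp: sum_distrib_left[symmetric])
    finally show ?thesis .
  qed
  have GA: "G \<subseteq> S.Aset u"
  proof
    fix D assume DG: "D \<in> G"
    then have D: "D \<in> F" "phi u D \<ge> 0" "w D > 0" unfolding G_def by auto
    have D01: "0 < D" "D \<le> 1" using D F01 by auto
    have sD: "{D} \<in> sets ?\<nu>" using setsN D by auto
    have postD: "posterior n \<mu> (consch F w) i D = mtop i D / D" if i: "i \<in> {1..n}" for i
    proof -
      have "emeasure (consch F w i) {D} = RN_deriv ?\<nu> (consch F w i) D * emeasure ?\<nu> {D}"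
        by (rule N.RN_deriv_singleton[OF S.ac[OF i] S.sets_pi_nu[OF i] sD])
      then have "ennreal (gfun F w i D) = RN_deriv ?\<nu> (consch F w i) D * ennreal (w D * D)"
        using emeasure_consch[OF Q, of D i] D N.emeasure_eq_measure single[OF D(1)] by simp
      then have "gfun F w i D = enn2real (RN_deriv ?\<nu> (consch F w i) D) * (w D * D)"
        using D D01 gfun_nonneg[OF Q i]
        by (metis enn2real_ennreal enn2real_mult mult_nonneg_nonneg less_imp_le)
      then have "enn2real (RN_deriv ?\<nu> (consch F w i) D) = gfun F w i D / (w D * D)"
        using D D01 by (simp add: field_simps)
      then show ?thesis unfolding posterior_def gfun_def using D D01 mu_pos[OF i] by simp
    qed
    have "(\<Sum>i=1..n. posterior n \<mu> (consch F w) i D * u i) = phi u D / D"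
      unfolding phi_def using postD by (simp add: sum_divide_distrib algebra_simps)
    also have "\<dots> \<ge> 0" using D D01 by simp
    finally show "D \<in> S.Aset u" unfolding S.Aset_def using spaceN D by auto
  qed
  have "(\<Sum>D\<in>{D\<in>F. phi u D \<ge> 0}. w D * D) = (\<Sum>D\<in>G. w D * D)"
    unfolding G_def using finF w0 by (intro sum.mono_neutral_right) (auto simp: less_le)
  also have "\<dots> = (\<Sum>D\<in>G. measure ?\<nu> {D})" using single unfolding G_def by simp
  also have "\<dots> = measure ?\<nu> G"
    using finF setsN unfolding G_def by (intro N.finite_measure_eq_sum_singleton[symmetric]) auto
  also have "\<dots> \<le> measure ?\<nu> (S.Aset u)"
    using GA S.Aset_sets by (intro N.finite_measure_mono) auto
  also have "\<dots> = sender_util n \<mu> (consch F w) u" using S.sender_eq by simp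
  finally show ?thesis .
qed

end


context setting
begin

lemma good1: "goodQ {1} (\<lambda>_. 1)"
  unfolding goodQ_def by auto

lemma schemes_ne: "{\<pi>. scheme n \<pi>} \<noteq> {}"
  using consch_scheme[OF good1] by auto

lemma sender_bounds: "scheme n \<pi> \<Longrightarrow> 0 \<le> sender_util n \<mu> \<pi> u \<and> sender_util n \<mu> \<pi> u \<le> 1"
proof -
  assume "scheme n \<pi>"
  then interpret S: sch n \<mu> \<pi> by unfold_locales
  show ?thesis using S.sender_ge0 S.sender_le1 by simp
qed

lemma bdd_sender: "bdd_above ((\<lambda>\<pi>. sender_util n \<mu> \<pi> u) ` {\<pi>. scheme n \<pi>})"
  using sender_bounds by (intro bdd_aboveI[where M=1]) auto

lemma opt_ge: "scheme n \<pi> \<Longrightarrow> sender_util n \<mu> \<pi> u \<le> opt_util n \<mu> u"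
  unfolding opt_util_def by (rule cSUP_upper[OF _ bdd_sender]) auto

lemma opt_le: "opt_util n \<mu> u \<le> 1"
  unfolding opt_util_def using schemes_ne sender_bounds by (intro cSUP_least) auto

lemma opt_le_gen:
  assumes "\<And>\<pi>. scheme n \<pi> \<Longrightarrow> sender_util n \<mu> \<pi> u \<le> c"
  shows "opt_util n \<mu> u \<le> c"
  unfolding opt_util_def using schemes_ne assms by (intro cSUP_least) auto

lemma bdd_regret: "scheme n \<pi> \<Longrightarrow> bdd_above ((\<lambda>u. opt_util n \<mu> u - sender_util n \<mu> \<pi> u) ` {u. mon_util n u})"
proof (intro bdd_aboveI[where M=1])
  fix y assume "scheme n \<pi>" "y \<in> (\<lambda>u. opt_util n \<mu> u - sender_util n \<mu> \<pi> u) ` {u. mon_util n u}"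
  then obtain u where "y = opt_util n \<mu> u - sender_util n \<mu> \<pi> u" "scheme n \<pi>" by auto
  then show "y \<le> 1" using opt_le[of u] sender_bounds[of \<pi> u] by linarith
qed

lemma regret_ge:
  "scheme n \<pi> \<Longrightarrow> mon_util n u \<Longrightarrow> opt_util n \<mu> u - sender_util n \<mu> \<pi> u \<le> regret_MON n \<mu> \<pi>"
  unfolding regret_MON_def by (rule cSUP_upper[OF _ bdd_regret]) auto

lemma mon0: "mon_util n (\<lambda>_. 0)"
  unfolding mon_util_def by auto

lemma regret_nonneg: "scheme n \<pi> \<Longrightarrow> 0 \<le> regret_MON n \<mu> \<pi>"
  using regret_ge[OF _ mon0, of \<pi>] opt_ge[of \<pi> "\<lambda>_. 0"] by linarith

lemma regret_le_gen:
  assumes "\<And>u. mon_util n u \<Longrightarrow> opt_util n \<mu> u - sender_util n \<mu> \<pi> u \<le> c"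
  shows "regret_MON n \<mu> \<pi> \<le> c"
  unfolding regret_MON_def using mon0 assms by (intro cSUP_least) auto

lemma Reg_le: "scheme n \<pi> \<Longrightarrow> Reg_MON n \<mu> \<le> regret_MON n \<mu> \<pi>"
  unfolding Reg_MON_def
  by (rule cINF_lower) (auto intro!: bdd_belowI[where m=0] regret_nonneg)

lemma Reg_ge:
  assumes "\<And>\<pi>. scheme n \<pi> \<Longrightarrow> c \<le> regret_MON n \<mu> \<pi>"
  shows "c \<le> Reg_MON n \<mu>"
  unfolding Reg_MON_def using schemes_ne assms by (intro cINF_greatest) auto

lemma phi_mun: "phi u (\<mu> n) = u n * \<mu> n"
proof -
  have "phi u (\<mu> n) = (\<Sum>i=1..n. if i = n then u n * \<mu> n else 0)"
    unfolding phi_def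
  proof (intro sum.cong refl)
    fix i assume i: "i \<in> {1..n}"
    show "u i * mtop i (\<mu> n) = (if i = n then u n * \<mu> n else 0)"
      using i mtop_n[of "\<mu> n"] mtop_low[of i "\<mu> n"] mu_nonneg[of n] n1 by auto
  qed
  also have "\<dots> = u n * \<mu> n" using n1 by simp
  finally show ?thesis .
qed

lemma mun_le1: "\<mu> n \<le> 1"
proof -
  have "\<mu> n \<le> (\<Sum>i=1..n. \<mu> i)"
    using n1 mu_nonneg by (intro member_le_sum) auto
  then show ?thesis using musum by simp
qed

lemma upper_main:
  assumes Q: "goodQ F w" and c0: "0 \<le> c"
    and H: "\<And>s. \<mu> n \<le> s \<Longrightarrow> s \<le> 1 \<Longrightarrow> s - (\<Sum>D\<in>{D\<in>F. D \<le> s}. w D * D) \<le> c"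
  shows "regret_MON n \<mu> (consch F w) \<le> c"
proof (rule regret_le_gen)
  fix u assume mon: "mon_util n u"
  have "opt_util n \<mu> u \<le> sender_util n \<mu> (consch F w) u + c"
  proof (rule opt_le_gen)
    fix \<pi> assume "scheme n \<pi>"
    then interpret S: sch n \<mu> \<pi> by unfold_locales
    define x where "x i = \<mu> i * measure (\<pi> i) (S.Aset u)" for i
    have x: "\<forall>i\<in>{1..n}. 0 \<le> x i \<and> x i \<le> \<mu> i"
    proof
      fix i assume i: "i \<in> {1..n}"
      interpret P: prob_space "\<pi> i" using S.prob_pi[OF i] .
      show "0 \<le> x i \<and> x i \<le> \<mu> i"
        unfolding x_def using mu_pos[OF i]
        by (auto intro: mult_left_le)
    qed
    have sx: "sender_util n \<mu> \<pi> u = (\<Sum>i=1..n. x i)" unfolding x_def by (rule S.sender_sum)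
    have ux: "(\<Sum>i=1..n. u i * x i) \<ge> 0" unfolding x_def by (rule S.sender_constraint)
    define s where "s = (\<Sum>i=1..n. x i)"
    have s0: "0 \<le> s" unfolding s_def using x by (intro sum_nonneg) auto
    have s1: "s \<le> 1" unfolding s_def using x musum by (metis sum_mono)
    have cons0: "0 \<le> sender_util n \<mu> (consch F w) u"
      using sender_bounds[OF consch_scheme[OF Q]] by simp
    show "sender_util n \<mu> \<pi> u \<le> sender_util n \<mu> (consch F w) u + c"
    proof (cases "u n < 0")
      case True
      have "(\<Sum>i=1..n. u i * x i) \<le> (\<Sum>i=1..n. u n * x i)"
        using x mon unfolding mon_util_def by (intro sum_mono mult_right_mono) auto
      also have "\<dots> = u n * s" unfolding s_def by (simp add: sum_distrib_left)
      finally have "\<not> s > 0" using ux mult_neg_pos[OF True, of s] by linarith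
      then have "s \<le> 0" by simp
      then show ?thesis using sx s_def cons0 c0 by simp
    next
      case False
      define s' where "s' = max s (\<mu> n)"
      have s'1: "s' \<le> 1" unfolding s'_def using s1 mun_le1 by simp
      have phis': "phi u s' \<ge> 0"
      proof (cases "\<mu> n \<le> s")
        case True
        then have "s' = s" unfolding s'_def by simp
        then show ?thesis using KL[OF mon x] ux unfolding s_def by simp
      next
        case False
        then have "s' = \<mu> n" unfolding s'_def by simp
        then show ?thesis using phi_mun \<open>\<not> u n < 0\<close> mu_nonneg[of n] n1 by simp
      qed
      have sub: "{D\<in>F. D \<le> s'} \<subseteq> {D\<in>F. phi u D \<ge> 0}"
      proof safe
        fix D assume "D \<in> F" "D \<le> s'"
        moreover have "0 \<le> D" using \<open>D \<in> F\<close> Q unfolding goodQ_def by auto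
        ultimately show "phi u D \<ge> 0" using phi_sub[OF mon _ _ s'1 phis'] by simp
      qed
      have "(\<Sum>D\<in>{D\<in>F. D \<le> s'}. w D * D) \<le> (\<Sum>D\<in>{D\<in>F. phi u D \<ge> 0}. w D * D)"
        using Q sub unfolding goodQ_def by (intro sum_mono2) auto
      also have "\<dots> \<le> sender_util n \<mu> (consch F w) u" by (rule consch_sender[OF Q])
      moreover have "s' - (\<Sum>D\<in>{D\<in>F. D \<le> s'}. w D * D) \<le> c"
        using H[of s'] s'1 unfolding s'_def by simp
      ultimately have "s' \<le> sender_util n \<mu> (consch F w) u + c" by linarith
      then show ?thesis using sx s_def unfolding s'_def by simp
    qed
  qed
  then show "opt_util n \<mu> u - sender_util n \<mu> (consch F w) u \<le> c" by simp
qed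

end


definition cc :: "(nat \<Rightarrow> real) \<Rightarrow> nat \<Rightarrow> real" where
  "cc \<theta> k = (case k of 0 \<Rightarrow> \<theta> 0 | Suc j \<Rightarrow> \<theta> (Suc j) - \<theta> j)"

lemma cc_0[simp]: "cc \<theta> 0 = \<theta> 0" and cc_Suc[simp]: "cc \<theta> (Suc j) = \<theta> (Suc j) - \<theta> j"
  unfolding cc_def by auto

lemma cc_nonneg: "(\<And>k. \<theta> k \<le> \<theta> (Suc k)) \<Longrightarrow> 0 \<le> \<theta> 0 \<Longrightarrow> 0 \<le> cc \<theta> k"
  by (cases k) auto

lemma ptw:
  fixes \<theta> :: "nat \<Rightarrow> real"
  assumes mono: "\<And>k. \<theta> k \<le> \<theta> (Suc k)" and t0: "0 \<le> \<theta> 0" and S: "0 \<le> S" and q: "0 \<le> q"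
  shows "(\<Sum>k\<le>m. cc \<theta> k * (if \<theta> k * S \<le> q then S else 0)) \<le> q \<and>
         (\<Sum>k\<le>m. cc \<theta> k * (if \<theta> k * S \<le> q then S else 0)) \<le> \<theta> m * S"
proof (induction m)
  case 0
  then show ?case using t0 S q by (auto intro: mult_nonneg_nonneg)
next
  case (Suc m)
  let ?s = "(\<Sum>k\<le>m. cc \<theta> k * (if \<theta> k * S \<le> q then S else 0))"
  have eq: "(\<Sum>k\<le>Suc m. cc \<theta> k * (if \<theta> k * S \<le> q then S else 0))
      = ?s + (\<theta> (Suc m) - \<theta> m) * (if \<theta> (Suc m) * S \<le> q then S else 0)" by simp
  show ?case
  proof (cases "\<theta> (Suc m) * S \<le> q")
    case True
    have "?s + (\<theta> (Suc m) - \<theta> m) * S \<le> \<theta> m * S + (\<theta> (Suc m) - \<theta> m) * S"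
      using Suc.IH by simp
    also have "\<dots> = \<theta> (Suc m) * S" by (simp add: algebra_simps)
    finally show ?thesis using eq True by simp
  next
    case False
    have "\<theta> m * S \<le> \<theta> (Suc m) * S" using mono S by (intro mult_right_mono) auto
    then show ?thesis using eq False Suc.IH by simp
  qed
qed

context sch
begin

lemma S_nonneg: "0 \<le> (\<Sum>i=1..n. post i x)"
  using post_nonneg by (intro sum_nonneg) auto

lemma post_int:
  assumes i: "i \<in> {1..n}"
  shows "integrable \<nu> (post i)" "(\<integral>x. post i x \<partial>\<nu>) = \<mu> i"
proof -
  interpret P: prob_space "\<pi> i" using prob_pi[OF i] .
  have sp: "space \<nu> \<in> sets \<nu>" by simp
  have eq: "\<And>x. x \<in> space \<nu> \<Longrightarrow> indicator (space \<nu>) x * post i x = post i x" by simp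
  show "integrable \<nu> (post i)"
  proof -
    have "integrable \<nu> (\<lambda>x. indicator (space \<nu>) x * post i x) = integrable \<nu> (post i)"
      by (rule Bochner_Integration.integrable_cong) auto
    then show ?thesis using int_post(1)[OF i sp] by simp
  qed
  have "(\<integral>x. post i x \<partial>\<nu>) = (\<integral>x. indicator (space \<nu>) x * post i x \<partial>\<nu>)"
    by (rule Bochner_Integration.integral_cong) auto
  also have "\<dots> = \<mu> i * measure (\<pi> i) (space \<nu>)" by (rule int_post(2)[OF i sp])
  also have "space \<nu> = space (\<pi> i)" using space_nu space_pi[OF i] by simp
  finally show "(\<integral>x. post i x \<partial>\<nu>) = \<mu> i" using P.prob_space by simp
qed

lemma sender_S:
  shows "integrable \<nu> (\<lambda>x. indicator (Aset u) x * (\<Sum>i=1..n. post i x))"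
    and "sender_util n \<mu> \<pi> u = (\<integral>x. indicator (Aset u) x * (\<Sum>i=1..n. post i x) \<partial>\<nu>)"
proof -
  have eq: "(\<lambda>x. indicator (Aset u) x * (\<Sum>i=1..n. post i x)) = (\<lambda>x. \<Sum>i=1..n. indicator (Aset u) x * post i x)"
    by (simp add: sum_distrib_left)
  show "integrable \<nu> (\<lambda>x. indicator (Aset u) x * (\<Sum>i=1..n. post i x))"
    unfolding eq by (intro Bochner_Integration.integrable_sum int_post(1)[OF _ Aset_sets]) auto
  have "sender_util n \<mu> \<pi> u = (\<Sum>i=1..n. \<integral>x. indicator (Aset u) x * post i x \<partial>\<nu>)"
    unfolding sender_sum using int_post(2)[OF _ Aset_sets] by simp
  also have "\<dots> = (\<integral>x. (\<Sum>i=1..n. indicator (Aset u) x * post i x) \<partial>\<nu>)"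
    by (rule Bochner_Integration.integral_sum[symmetric]) (auto intro: int_post(1)[OF _ Aset_sets])
  finally show "sender_util n \<mu> \<pi> u = (\<integral>x. indicator (Aset u) x * (\<Sum>i=1..n. post i x) \<partial>\<nu>)"
    unfolding eq .
qed

lemma Aset_ubin:
  assumes x: "x \<in> space \<nu>"
  shows "x \<in> Aset (ubin \<theta>) \<longleftrightarrow> \<theta> * (\<Sum>i=1..n. post i x) \<le> post n x"
proof -
  have "(\<Sum>i=1..n. post i x * ubin \<theta> i) = (\<Sum>i=1..n. - \<theta> * post i x + (if i = n then post n x else 0))"
    unfolding ubin_def by (intro sum.cong) (auto simp: algebra_simps)
  also have "\<dots> = (\<Sum>i=1..n. - \<theta> * post i x) + (\<Sum>i=1..n. (if i = n then post n x else 0))"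
    by (rule sum.distrib)
  also have "\<dots> = - \<theta> * (\<Sum>i=1..n. post i x) + post n x"
    using n1 by (simp add: sum_distrib_left)
  finally show ?thesis unfolding Aset_def using x by auto
qed

lemma LB_sum:
  fixes \<theta> :: "nat \<Rightarrow> real"
  assumes mono: "\<And>k. \<theta> k \<le> \<theta> (Suc k)" and t0: "0 \<le> \<theta> 0"
  shows "(\<Sum>k\<le>m. cc \<theta> k * sender_util n \<mu> \<pi> (ubin (\<theta> k))) \<le> \<mu> n"
proof -
  let ?S = "\<lambda>x. \<Sum>i=1..n. post i x"
  let ?f = "\<lambda>k x. cc \<theta> k * (indicator (Aset (ubin (\<theta> k))) x * ?S x)"
  have nI: "n \<in> {1..n}" using n1 by auto
  have "(\<Sum>k\<le>m. cc \<theta> k * sender_util n \<mu> \<pi> (ubin (\<theta> k)))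
      = (\<Sum>k\<le>m. \<integral>x. ?f k x \<partial>\<nu>)"
    using sender_S(2) by simp
  also have "\<dots> = (\<integral>x. (\<Sum>k\<le>m. ?f k x) \<partial>\<nu>)"
    by (rule Bochner_Integration.integral_sum[symmetric]) (intro integrable_mult_right sender_S(1))
  also have "\<dots> \<le> (\<integral>x. post n x \<partial>\<nu>)"
  proof (rule integral_mono)
    show "integrable \<nu> (\<lambda>x. \<Sum>k\<le>m. ?f k x)"
      by (intro Bochner_Integration.integrable_sum integrable_mult_right sender_S(1))
    show "integrable \<nu> (post n)" by (rule post_int(1)[OF nI])
    fix x assume x: "x \<in> space \<nu>"
    have "(\<Sum>k\<le>m. ?f k x) = (\<Sum>k\<le>m. cc \<theta> k * (if \<theta> k * ?S x \<le> post n x then ?S x else 0))"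
      using Aset_ubin[OF x] by (intro sum.cong) auto
    also have "\<dots> \<le> post n x"
      using ptw[OF mono t0 S_nonneg post_nonneg[OF nI]] by blast
    finally show "(\<Sum>k\<le>m. ?f k x) \<le> post n x" .
  qed
  also have "\<dots> = \<mu> n" by (rule post_int(2)[OF nI])
  finally show ?thesis .
qed

end

context setting
begin

lemma opt_ubin:
  assumes t: "\<mu> n \<le> \<theta>" "\<theta> \<le> 1"
  shows "\<mu> n / \<theta> \<le> opt_util n \<mu> (ubin \<theta>)"
proof -
  have p0: "0 < \<mu> n" using mu_pos n1 by auto
  have t0: "0 < \<theta>" using t p0 by simp
  define z where "z = \<mu> n / \<theta>"
  have z0: "0 < z" and z1: "z \<le> 1" and zp: "\<mu> n \<le> z"
    unfolding z_def using t p0 t0 by (auto simp: field_simps)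
  have Q: "goodQ {z} (\<lambda>_. 1)" unfolding goodQ_def using z0 z1 by auto
  have "phi (ubin \<theta>) z = 0"
    using phi_ubin[of z \<theta>] z0 z1 zp mtop_n[of z] t0 unfolding z_def by simp
  then have "{D\<in>{z}. phi (ubin \<theta>) D \<ge> 0} = {z}" by auto
  then have "(\<Sum>D\<in>{D\<in>{z}. phi (ubin \<theta>) D \<ge> 0}. 1 * D) = z" by simp
  then have "z \<le> sender_util n \<mu> (consch {z} (\<lambda>_. 1)) (ubin \<theta>)"
    using consch_sender[OF Q, of "ubin \<theta>"] by simp
  also have "\<dots> \<le> opt_util n \<mu> (ubin \<theta>)" by (rule opt_ge[OF consch_scheme[OF Q]])
  finally show ?thesis unfolding z_def .
qed

lemma lower_main:
  fixes \<theta> :: "nat \<Rightarrow> real"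
  assumes sch: "scheme n \<pi>"
    and mono: "\<And>k. \<theta> k \<le> \<theta> (Suc k)" and t0: "\<mu> n \<le> \<theta> 0" and t1: "\<theta> m \<le> 1"
  shows "(\<Sum>k\<le>m. cc \<theta> k * (\<mu> n / \<theta> k - regret_MON n \<mu> \<pi>)) \<le> \<mu> n"
proof -
  interpret S: sch n \<mu> \<pi> by unfold_locales (rule sch)
  have p0: "0 < \<mu> n" using mu_pos n1 by auto
  have monoT: "\<theta> j \<le> \<theta> k" if "j \<le> k" for j k
    using that mono by (induction k) (auto simp: le_Suc_eq intro: order_trans)
  have "(\<Sum>k\<le>m. cc \<theta> k * (\<mu> n / \<theta> k - regret_MON n \<mu> \<pi>))
      \<le> (\<Sum>k\<le>m. cc \<theta> k * sender_util n \<mu> \<pi> (ubin (\<theta> k)))"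
  proof (intro sum_mono mult_left_mono)
    fix k assume k: "k \<in> {..m}"
    have tk: "\<mu> n \<le> \<theta> k" "\<theta> k \<le> 1"
      using monoT[of 0 k] monoT[of k m] k t0 t1 by auto
    show "\<mu> n / \<theta> k - regret_MON n \<mu> \<pi> \<le> sender_util n \<mu> \<pi> (ubin (\<theta> k))"
      using opt_ubin[OF tk] regret_ge[OF sch ubin_mon, of "\<theta> k"] by linarith
    show "0 \<le> cc \<theta> k" using cc_nonneg[of \<theta>, OF mono] t0 p0 by simp
  qed
  also have "\<dots> \<le> \<mu> n" using S.LB_sum[of \<theta>, OF mono] t0 p0 by simp
  finally show ?thesis .
qed

end


lemma sum_cc: "(\<Sum>k\<le>m. cc \<theta> k) = \<theta> m"
  by (induction m) auto

lemma telescope_up: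
  fixes g :: "nat \<Rightarrow> real"
  shows "(\<Sum>j\<le>m. g (Suc j) - g j) = g (Suc m) - g 0"
  by (induction m) auto

lemma one_minus_exp_lower:
  fixes x :: real assumes "0 \<le> x"
  shows "x / (1 + x) \<le> 1 - exp (- x)"
proof -
  have "1 + x \<le> exp x" by (rule exp_ge_add_one_self)
  then have "exp (- x) \<le> 1 / (1 + x)" using assms
    by (simp add: exp_minus field_simps)
  then show ?thesis using assms by (simp add: field_simps)
qed

lemma one_minus_exp_upper:
  fixes x :: real
  shows "1 - exp (- x) \<le> x"
  using exp_ge_add_one_self[of "- x"] by simp

context setting
begin

definition bb :: real where "bb = max (\<mu> n) (1 / exp 1)"
definition LL :: real where "LL = - ln bb"

lemma p_pos: "0 < \<mu> n" using mu_pos n1 by auto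

lemma bb_pos: "0 < bb" unfolding bb_def using p_pos by (simp add: max_def)

lemma bb_le1: "bb \<le> 1" unfolding bb_def using mun_le1 by (simp add: max_def)

lemma LL_nonneg: "0 \<le> LL" unfolding LL_def using bb_pos bb_le1 by simp

lemma LL_le1: "LL \<le> 1"
proof -
  have "1 / exp 1 \<le> bb" unfolding bb_def by simp
  then have "ln (1 / exp 1) \<le> ln bb" using bb_pos by (subst ln_le_cancel_iff) auto
  then show ?thesis unfolding LL_def by (simp add: ln_div)
qed

lemma exp_LL: "exp LL = 1 / bb"
  unfolding LL_def using bb_pos by (simp add: exp_minus inverse_eq_divide)

lemma V_eq: "bb * LL = (if \<mu> n \<le> 1 / exp 1 then 1 / exp 1 else - \<mu> n * ln (\<mu> n))"
proof (cases "\<mu> n \<le> 1 / exp 1")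
  case True
  then have "bb = 1 / exp 1" unfolding bb_def by simp
  then show ?thesis using True unfolding LL_def by (simp add: ln_div)
next
  case False
  then have "bb = \<mu> n" unfolding bb_def by simp
  then show ?thesis using False unfolding LL_def by simp
qed

lemma lower_bound:
  assumes sch: "scheme n \<pi>"
  shows "bb * LL \<le> regret_MON n \<mu> \<pi>"
proof -
  define r where "r = regret_MON n \<mu> \<pi>"
  define p where "p = \<mu> n"
  have p0: "0 < p" unfolding p_def by (rule p_pos)
  have pb: "p \<le> bb" unfolding p_def bb_def by simp
  have key: "bb * LL \<le> r + r * (LL / real (Suc m))" for m
  proof -
    define x where "x = LL / real (Suc m)"
    have x0: "0 \<le> x" unfolding x_def using LL_nonneg by simp
    have Mx: "real (Suc m) * x = LL" unfolding x_def by simp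
    define \<theta> where "\<theta> k = p * exp (real k * x)" for k
    have mono: "\<theta> k \<le> \<theta> (Suc k)" for k
      unfolding \<theta>_def using p0 x0 by (auto intro!: mult_left_mono simp: distrib_right)
    have t0: "\<mu> n \<le> \<theta> 0" unfolding \<theta>_def p_def by simp
    have tM: "\<theta> (Suc m) = p / bb" unfolding \<theta>_def using Mx exp_LL by simp
    have t1: "\<theta> (Suc m) \<le> 1" using tM pb bb_pos by simp
    have tpos: "0 < \<theta> k" for k unfolding \<theta>_def using p0 by simp
    have ratio: "(\<theta> (Suc j) - \<theta> j) * (p / \<theta> (Suc j)) = p * (1 - exp (- x))" for j
    proof -
      have "exp (real (Suc j) * x) * exp (- x) = exp (real (Suc j) * x + - x)"
        by (rule exp_add[symmetric])
      also have "\<dots> = exp (real j * x)" by (simp add: distrib_right)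
      finally have "\<theta> j = \<theta> (Suc j) * exp (- x)"
        unfolding \<theta>_def by simp
      then show ?thesis using tpos[of "Suc j"] by (simp add: field_simps)
    qed
    have LM: "(\<Sum>k\<le>Suc m. cc \<theta> k * (p / \<theta> k - r)) \<le> p"
      unfolding r_def p_def by (rule lower_main[OF sch mono t0 t1])
    have E1: "(\<Sum>k\<le>Suc m. cc \<theta> k * (p / \<theta> k - r))
        = (\<Sum>k\<le>Suc m. cc \<theta> k * (p / \<theta> k)) - r * (\<Sum>k\<le>Suc m. cc \<theta> k)"
    proof -
      have "(\<Sum>k\<le>Suc m. cc \<theta> k * (p / \<theta> k - r)) = (\<Sum>k\<le>Suc m. cc \<theta> k * (p / \<theta> k) - r * cc \<theta> k)"
        by (intro sum.cong) (auto simp: algebra_simps)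
      also have "\<dots> = (\<Sum>k\<le>Suc m. cc \<theta> k * (p / \<theta> k)) - (\<Sum>k\<le>Suc m. r * cc \<theta> k)"
        by (rule sum_subtractf)
      also have "(\<Sum>k\<le>Suc m. r * cc \<theta> k) = r * (\<Sum>k\<le>Suc m. cc \<theta> k)"
        by (rule sum_distrib_left[symmetric])
      finally show ?thesis .
    qed
    have E2: "(\<Sum>k\<le>Suc m. cc \<theta> k * (p / \<theta> k)) = p + real (Suc m) * (p * (1 - exp (- x)))"
    proof -
      have "(\<Sum>k\<le>Suc m. cc \<theta> k * (p / \<theta> k)) = cc \<theta> 0 * (p / \<theta> 0) + (\<Sum>j\<le>m. cc \<theta> (Suc j) * (p / \<theta> (Suc j)))"
        by (rule sum.atMost_Suc_shift)
      also have "(\<Sum>j\<le>m. cc \<theta> (Suc j) * (p / \<theta> (Suc j))) = (\<Sum>j\<le>m. p * (1 - exp (- x)))"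
        using ratio by simp
      also have "cc \<theta> 0 * (p / \<theta> 0) = p" using tpos[of 0] by simp
      finally show ?thesis by simp
    qed
    have E3: "(\<Sum>k\<le>Suc m. cc \<theta> k) = p / bb" using sum_cc tM by simp
    have "(\<Sum>k\<le>Suc m. cc \<theta> k * (p / \<theta> k - r)) = p + real (Suc m) * (p * (1 - exp (- x))) - r * (p / bb)"
      unfolding E1 E2 E3 ..
    then have ineq: "real (Suc m) * (p * (1 - exp (- x))) \<le> r * (p / bb)" using LM by linarith
    have "real (Suc m) * (x / (1 + x)) \<le> real (Suc m) * (1 - exp (- x))"
      using one_minus_exp_lower[OF x0] by (intro mult_left_mono) auto
    also have "\<dots> \<le> r / bb"
    proof -
      have "p * (real (Suc m) * (1 - exp (- x))) \<le> p * (r / bb)"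
        using ineq by (simp add: algebra_simps)
      then show ?thesis using p0 mult_le_cancel_left_pos[of p "real (Suc m) * (1 - exp (- x))" "r / bb"]
        by linarith
    qed
    finally have "LL / (1 + x) \<le> r / bb" using Mx by (simp add: field_simps)
    then have "bb * LL \<le> r * (1 + x)" using bb_pos x0 by (simp add: field_simps)
    then show ?thesis unfolding x_def by (simp add: algebra_simps)
  qed
  show ?thesis
  proof (rule ccontr)
    assume "\<not> bb * LL \<le> regret_MON n \<mu> \<pi>"
    then have lt: "r < bb * LL" unfolding r_def by simp
    have r0: "0 \<le> r" unfolding r_def by (rule regret_nonneg[OF sch])
    obtain m :: nat where m: "r * LL / (bb * LL - r) < real m" using reals_Archimedean2 by blast
    have pos: "0 < bb * LL - r" using lt by simp
    have "r * LL < real m * (bb * LL - r)" using m pos by (simp add: field_simps)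
    also have "\<dots> \<le> real (Suc m) * (bb * LL - r)" using pos by (intro mult_right_mono) auto
    finally have "r * LL < real (Suc m) * (bb * LL - r)" .
    moreover have "bb * LL * real (Suc m) \<le> r * real (Suc m) + r * LL"
      using key[of m] by (simp add: field_simps)
    ultimately show False by (simp add: algebra_simps)
  qed
qed

end


lemma min_diff_le:
  fixes a a' t :: real
  assumes "a' \<le> a"
  shows "min a t - min a' t \<le> a - a'"
  using assms by (auto simp: min_def)

context setting
begin

lemma upper_step:
  assumes b1: "bb < 1"
  shows "Reg_MON n \<mu> \<le> bb * LL + LL / real (Suc m)"
proof -
  have L0: "0 < LL" unfolding LL_def using b1 bb_pos by simp
  define M where "M = real (Suc m)"
  define x where "x = LL / M"
  have x0: "0 < x" unfolding x_def M_def using L0 by simp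
  have Mx: "M * x = LL" unfolding x_def M_def by simp
  define D where "D k = bb * exp (real k * x)" for k :: nat
  define w0 where "w0 = 1 - M * (1 - exp (- x))"
  define w where "w v = (if v = bb then w0 else 1 - exp (- x))" for v
  define F where "F = D ` {..Suc m}"
  have e0: "0 \<le> 1 - exp (- x)" using x0 by simp
  have ex: "1 - exp (- x) \<le> x" by (rule one_minus_exp_upper)
  have w00: "0 \<le> w0"
  proof -
    have "M * (1 - exp (- x)) \<le> M * x" using ex unfolding M_def by (intro mult_left_mono) auto
    then show ?thesis unfolding w0_def using Mx LL_le1 by linarith
  qed
  have Dpos: "0 < D k" for k unfolding D_def using bb_pos by simp
  have D0: "D 0 = bb" unfolding D_def by simp
  have DM: "D (Suc m) = 1"
  proof -
    have "real (Suc m) * x = LL" using Mx unfolding M_def .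
    then show ?thesis unfolding D_def using exp_LL bb_pos by simp
  qed
  have Dmono: "D j \<le> D k" if "j \<le> k" for j k
    unfolding D_def using that x0 bb_pos by (auto intro!: mult_left_mono)
  have Dle1: "D k \<le> 1" if "k \<le> Suc m" for k using Dmono[OF that] DM by simp
  have Dinj: "inj_on D {..Suc m}"
  proof (rule inj_onI)
    fix j k assume "D j = D k"
    then have "exp (real j * x) = exp (real k * x)" unfolding D_def using bb_pos by simp
    then have "real j * x = real k * x" by simp
    then show "j = k" using x0 by simp
  qed
  have Dbb: "D k = bb \<longleftrightarrow> k = 0" if "k \<le> Suc m" for k
    using inj_onD[OF Dinj, of k 0] that D0 by auto
  have Dstep: "D j = D (Suc j) * exp (- x)" for j
  proof -
    have "exp (real (Suc j) * x) * exp (- x) = exp (real (Suc j) * x + - x)"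
      by (rule exp_add[symmetric])
    also have "\<dots> = exp (real j * x)" by (simp add: distrib_right)
    finally show ?thesis unfolding D_def by simp
  qed
  have sumF: "(\<Sum>v\<in>F. f v) = (\<Sum>k\<le>Suc m. f (D k))" for f :: "real \<Rightarrow> real"
    unfolding F_def by (rule sum.reindex_cong[OF Dinj refl refl])
  have wD: "w (D (Suc j)) = 1 - exp (- x)" if "j \<le> m" for j
    unfolding w_def using Dbb[of "Suc j"] that by auto
  have Q: "goodQ F w"
    unfolding goodQ_def
  proof (intro conjI ballI)
    show "finite F" unfolding F_def by simp
    show "F \<subseteq> {0<..1}" unfolding F_def using Dpos Dle1 by auto
    fix v assume "v \<in> F" then show "0 \<le> w v" unfolding w_def using w00 e0 by auto
  next
    have "(\<Sum>v\<in>F. w v) = (\<Sum>k\<le>Suc m. w (D k))" by (rule sumF)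
    also have "\<dots> = w (D 0) + (\<Sum>j\<le>m. w (D (Suc j)))" by (rule sum.atMost_Suc_shift)
    also have "(\<Sum>j\<le>m. w (D (Suc j))) = (\<Sum>j\<le>m. 1 - exp (- x))" using wD by simp
    also have "w (D 0) = w0" unfolding w_def D0 by simp
    finally show "(\<Sum>v\<in>F. w v) = 1" unfolding w0_def M_def by simp
  qed
  have H: "s - (\<Sum>v\<in>{v\<in>F. v \<le> s}. w v * v) \<le> bb * LL + x" if s: "\<mu> n \<le> s" "s \<le> 1" for s
  proof -
    define T where "T = (\<Sum>v\<in>{v\<in>F. v \<le> s}. w v * v)"
    have T1: "T = (\<Sum>k\<le>Suc m. (if D k \<le> s then w (D k) * D k else 0))"
    proof -
      have "T = (\<Sum>v\<in>F. if v \<le> s then w v * v else 0)"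
        unfolding T_def F_def by (rule sum.inter_filter) simp
      also have "\<dots> = (\<Sum>k\<le>Suc m. (if D k \<le> s then w (D k) * D k else 0))" by (rule sumF)
      finally show ?thesis .
    qed
    have wnn: "0 \<le> w v" for v unfolding w_def using w00 e0 by auto
    have T0: "0 \<le> T" unfolding T1
    proof (intro sum_nonneg)
      fix k show "0 \<le> (if D k \<le> s then w (D k) * D k else 0)"
        using wnn[of "D k"] Dpos[of k] by simp
    qed
    show ?thesis
    proof (cases "s < bb")
      case True
      then have "bb = 1 / exp 1" using s unfolding bb_def by (auto simp: max_def split: if_splits)
      then have "bb * LL = 1 / exp 1" unfolding LL_def by (simp add: ln_div)
      then show ?thesis using True T0 x0 \<open>bb = 1 / exp 1\<close> unfolding T_def by linarith
    next
      case False
      then have sb: "bb \<le> s" by simp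
      define t where "t = s * exp (- x)"
      have t1: "t \<le> 1" unfolding t_def using s x0 by (simp add: mult_le_one)
      have step: "min (D (Suc j)) t - min (D j) t \<le> (if D (Suc j) \<le> s then w (D (Suc j)) * D (Suc j) else 0)"
        if j: "j \<le> m" for j
      proof (cases "D (Suc j) \<le> s")
        case True
        have "w (D (Suc j)) * D (Suc j) = D (Suc j) - D j"
          using wD[OF j] Dstep[of j] by (simp add: right_diff_distrib mult.commute)
        then show ?thesis using True min_diff_le[OF Dmono[of j "Suc j"], of t] by simp
      next
        case False
        have "t < D j" unfolding t_def using Dstep[of j] False by simp
        moreover have "D j \<le> D (Suc j)" by (rule Dmono) simp
        ultimately show ?thesis using False by (simp add: min_def)
      qed
      have eqT: "T = w (D 0) * D 0 + (\<Sum>j\<le>m. (if D (Suc j) \<le> s then w (D (Suc j)) * D (Suc j) else 0))"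
        unfolding T1 using sb D0 by (subst sum.atMost_Suc_shift) simp
      have ge: "(\<Sum>j\<le>m. min (D (Suc j)) t - min (D j) t)
          \<le> (\<Sum>j\<le>m. (if D (Suc j) \<le> s then w (D (Suc j)) * D (Suc j) else 0))"
        using step by (intro sum_mono) auto
      have tel: "(\<Sum>j\<le>m. min (D (Suc j)) t - min (D j) t) = min (D (Suc m)) t - min (D 0) t"
        by (rule telescope_up)
      have w0D: "w (D 0) * D 0 = w0 * bb" unfolding w_def D0 by simp
      have "T \<ge> w0 * bb + (min (D (Suc m)) t - min (D 0) t)"
        using eqT ge tel w0D by linarith
      then have "T \<ge> w0 * bb + t - bb" using DM D0 t1 by (simp add: min_def split: if_splits)
      then have "s - T \<le> s * (1 - exp (- x)) + bb * (M * (1 - exp (- x)))"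
        unfolding t_def w0_def by (simp add: algebra_simps)
      also have "\<dots> \<le> 1 * x + bb * (M * x)"
        using s e0 ex bb_pos unfolding M_def
        by (intro add_mono mult_mono mult_left_mono) auto
      also have "\<dots> = x + bb * LL" using Mx by simp
      finally show ?thesis unfolding T_def by simp
    qed
  qed
  have c0: "0 \<le> bb * LL + x" using bb_pos LL_nonneg x0 by simp
  have "regret_MON n \<mu> (consch F w) \<le> bb * LL + x"
    by (rule upper_main[OF Q c0 H])
  then show ?thesis using Reg_le[OF consch_scheme[OF Q]] unfolding x_def M_def by simp
qed

lemma upper_bound: "Reg_MON n \<mu> \<le> bb * LL"
proof (cases "bb < 1")
  case False
  then have b1: "bb = 1" using bb_le1 by simp
  then have pn: "\<mu> n = 1" unfolding bb_def by (auto simp: max_def split: if_splits)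
  have LL0: "LL = 0" unfolding LL_def using b1 by simp
  have Q: "goodQ {1} (\<lambda>_. 1)" by (rule good1)
  have "regret_MON n \<mu> (consch {1} (\<lambda>_. 1)) \<le> 0"
  proof (rule upper_main[OF Q])
    fix s assume "\<mu> n \<le> s" "s \<le> 1"
    then have "s = 1" using pn by simp
    moreover have "{D\<in>{1::real}. D \<le> 1} = {1}" by auto
    ultimately show "s - (\<Sum>D\<in>{D\<in>{1}. D \<le> s}. 1 * D) \<le> 0" by simp
  qed simp
  then show ?thesis using Reg_le[OF consch_scheme[OF Q]] LL0 by simp
next
  case True
  show ?thesis
  proof (rule ccontr)
    assume "\<not> Reg_MON n \<mu> \<le> bb * LL"
    then have gap: "0 < Reg_MON n \<mu> - bb * LL" by simp
    obtain m :: nat where m: "LL / (Reg_MON n \<mu> - bb * LL) < real m" using reals_Archimedean2 by blast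
    have "LL < real m * (Reg_MON n \<mu> - bb * LL)" using m gap by (simp add: field_simps)
    also have "\<dots> \<le> real (Suc m) * (Reg_MON n \<mu> - bb * LL)" using gap by (intro mult_right_mono) auto
    finally have "LL / real (Suc m) < Reg_MON n \<mu> - bb * LL" by (simp add: field_simps)
    then show False using upper_step[OF True, of m] by simp
  qed
qed

end

theorem theorem2:
  fixes n :: nat and \<mu> :: "nat \<Rightarrow> real"
  assumes "n \<ge> 1"
    and "\<forall>i\<in>{1..n}. \<mu> i > 0"
    and "(\<Sum>i=1..n. \<mu> i) = 1"
  shows "Reg_MON n \<mu> = (if \<mu> n \<le> 1 / exp 1 then 1 / exp 1 else - \<mu> n * ln (\<mu> n))"
proof -
  interpret setting n \<mu> using assms by unfold_locales
  have "Reg_MON n \<mu> = bb * LL"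
    using upper_bound lower_bound Reg_ge by (meson order_antisym)
  then show ?thesis using V_eq by simp
qed


end
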